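(* Let $\phi(z)\in\mathbb{R}[z]$ be a cubic polynomial with negative lead coefficient. If $\mathfrak{K}_\infty\cap\mathbb{R}$ consists of more than one point, then $\phi$ has at least two distinct real periodic points of period two. Moreover, if $\alpha\in\mathbb{R}$ is the smallest such periodic point, then $\phi(\alpha)$ is the largest, and $\mathfrak{K}_\infty\cap\mathbb{R}\subseteq[\alpha,\phi(\alpha)]$.
   Context: The (archimedean) filled Julia set of $\phi$ is $\mathfrak{K}_\infty=\{x\in\mathbb{C}:\{|\phi^n(x)|:n\ge0\}\text{ is bounded}\}$, where $\phi^n$ is the $n$-th iterate of $\phi$. A point $x$ is periodic of period $n$ if $n$ is the least positive integer with $\phi^n(x)=x$. *)

theory Defs
  imports "HOL-Analysis.Analysis" "HOL-Computational_Algebra.Polynomial"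
begin

definition filled_julia :: "complex poly \<Rightarrow> complex set" where
  "filled_julia p = {x. bounded (range (\<lambda>n. (poly p ^^ n) x))}"

definition periodic_of_period :: "('a \<Rightarrow> 'a) \<Rightarrow> nat \<Rightarrow> 'a \<Rightarrow> bool" where
  "periodic_of_period f n x \<longleftrightarrow>
     0 < n \<and> (f ^^ n) x = x \<and> (\<forall>m. 0 < m \<and> m < n \<longrightarrow> (f ^^ m) x \<noteq> x)"

end

theory Submission
  imports Defs
begin

lemma cubic_bound_aux:
  fixes a b c d y :: real
  assumes a: "a > 0" and y: "y \<ge> (\<bar>b\<bar>+\<bar>c\<bar>+\<bar>d\<bar>+2)/a + 1"
  shows "a*y^3 - \<bar>b\<bar>*y^2 - \<bar>c\<bar>*y - \<bar>d\<bar> \<ge> 2*y"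
proof -
  define S where "S = \<bar>b\<bar>+\<bar>c\<bar>+\<bar>d\<bar>+2"
  have S0: "S \<ge> 2" unfolding S_def by simp
  have y1: "y \<ge> 1" using y a S0 unfolding S_def[symmetric]
    by (smt (verit) divide_nonneg_pos)
  have "a*y \<ge> a*(S/a + 1)" using y a unfolding S_def[symmetric] by (simp add: mult_left_mono)
  also have "a*(S/a+1) = S + a" using a by (simp add: field_simps)
  finally have ay: "a*y \<ge> S" using a by simp
  have "a*y^3 = (a*y)*y^2" by (simp add: power3_eq_cube power2_eq_square)
  also have "\<dots> \<ge> S*y^2" using ay by (simp add: mult_right_mono)
  finally have h1: "a*y^3 \<ge> S*y^2" .
  have yy: "y^2 \<ge> y" using y1 by (simp add: power2_eq_square)
  have "S*y^2 = \<bar>b\<bar>*y^2 + (\<bar>c\<bar>+\<bar>d\<bar>+2)*y^2" unfolding S_def by (simp add: algebra_simps)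
  moreover have "(\<bar>c\<bar>+\<bar>d\<bar>+2)*y^2 \<ge> (\<bar>c\<bar>+\<bar>d\<bar>+2)*y"
    using yy by (simp add: mult_left_mono)
  moreover have "\<bar>d\<bar>*y \<ge> \<bar>d\<bar>" using y1 by (simp add: mult_left_mono[of 1 y, simplified])
  moreover have "(\<bar>c\<bar>+\<bar>d\<bar>+2)*y = \<bar>c\<bar>*y + \<bar>d\<bar>*y + 2*y" by (simp add: algebra_simps)
  ultimately show ?thesis using h1 by linarith
qed

lemma cubic_escape:
  fixes phi :: "real poly"
  assumes "degree phi = 3" "lead_coeff phi < 0"
  obtains R where "R \<ge> 1"
    "\<And>x. x \<ge> R \<Longrightarrow> poly phi x \<le> -2*x"
    "\<And>x. x \<le> -R \<Longrightarrow> poly phi x \<ge> -2*x"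
proof -
  define a b c d where "a = - coeff phi 3" "b = coeff phi 2" "c = coeff phi 1" "d = coeff phi 0"
  have a: "a > 0" using assms unfolding a_b_c_d_def by simp
  have P: "poly phi x = -a*x^3 + b*x^2 + c*x + d" for x
    using assms(1) unfolding poly_altdef a_b_c_d_def
    by (simp add: numeral_3_eq_3 numeral_2_eq_2 atMost_Suc algebra_simps)
  define R where "R = (\<bar>b\<bar>+\<bar>c\<bar>+\<bar>d\<bar>+2)/a + 1"
  have R1: "R \<ge> 1" unfolding R_def using a by simp
  show ?thesis
  proof (rule that[OF R1])
    fix x assume x: "x \<ge> R"
    have "a*x^3 - \<bar>b\<bar>*x^2 - \<bar>c\<bar>*x - \<bar>d\<bar> \<ge> 2*x"
      using cubic_bound_aux[OF a] x unfolding R_def by blast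
    moreover have "b*x^2 \<le> \<bar>b\<bar>*x^2" by (simp add: mult_right_mono)
    moreover have "c*x \<le> \<bar>c\<bar>*x" using x R1 by (simp add: mult_right_mono)
    moreover have "d \<le> \<bar>d\<bar>" by simp
    ultimately show "poly phi x \<le> -2*x" unfolding P by linarith
  next
    fix x assume x: "x \<le> -R"
    have H: "a*(-x)^3 - \<bar>b\<bar>*(-x)^2 - \<bar>c\<bar>*(-x) - \<bar>d\<bar> \<ge> 2*(-x)"
      using cubic_bound_aux[OF a, of b c d "-x"] x unfolding R_def by linarith
    have "-(a*x^3) - \<bar>b\<bar>*x^2 + \<bar>c\<bar>*x - \<bar>d\<bar> \<ge> -2*x" using H by simp
    moreover have "b*x^2 \<ge> -\<bar>b\<bar>*x^2" using mult_right_mono[of "-\<bar>b\<bar>" b "x^2"] by simp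
    moreover have "c*x \<ge> -\<bar>c\<bar>*(-x)" using mult_right_mono_neg[of c "\<bar>c\<bar>" x] x R1 by simp
    moreover have "d \<ge> -\<bar>d\<bar>" by simp
    ultimately show "poly phi x \<ge> -2*x" unfolding P by linarith
  qed
qed

lemma iter_cont: "continuous_on UNIV (poly (phi::real poly) ^^ n)"
proof (induction n)
  case 0 then show ?case by (simp add: continuous_on_id)
next
  case (Suc n)
  have "continuous_on UNIV (\<lambda>x. poly phi ((poly phi ^^ n) x))"
    by (intro continuous_on_poly Suc)
  then show ?case by (simp add: comp_def)
qed

lemma iter_of_real:
  "(poly (map_poly complex_of_real phi) ^^ n) (complex_of_real x) = complex_of_real ((poly phi ^^ n) x)"
proof (induction n)
  case 0 then show ?case by simp
next
  case (Suc n)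
  have pr: "poly (map_poly of_real p) (of_real y) = (of_real (poly p y) :: complex)" for p :: "real poly" and y
    by (induction p) (auto simp: map_poly_pCons)
  show ?case using Suc by (simp add: pr)
qed

lemma julia_real_iff:
  "complex_of_real x \<in> filled_julia (map_poly complex_of_real phi) \<longleftrightarrow>
   bounded (range (\<lambda>n. (poly phi ^^ n) x))"
  unfolding filled_julia_def bounded_iff by (simp add: iter_of_real)

theorem lemma4p11:
  fixes phi :: "real poly"
  assumes "degree phi = 3"
    and "lead_coeff phi < 0"
    and "\<exists>a b. a \<noteq> b \<and> complex_of_real a \<in> filled_julia (map_poly complex_of_real phi)
                 \<and> complex_of_real b \<in> filled_julia (map_poly complex_of_real phi)"
  shows "(\<exists>a b. a \<noteq> b \<and> periodic_of_period (poly phi) 2 a \<and> periodic_of_period (poly phi) 2 b)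
    \<and> (\<forall>\<alpha>. periodic_of_period (poly phi) 2 \<alpha>
           \<and> (\<forall>y. periodic_of_period (poly phi) 2 y \<longrightarrow> \<alpha> \<le> y) \<longrightarrow>
          periodic_of_period (poly phi) 2 (poly phi \<alpha>)
          \<and> (\<forall>y. periodic_of_period (poly phi) 2 y \<longrightarrow> y \<le> poly phi \<alpha>)
          \<and> {x::real. complex_of_real x \<in> filled_julia (map_poly complex_of_real phi)}
              \<subseteq> {\<alpha>..poly phi \<alpha>})"
proof -
  define f where "f = poly phi"
  obtain R where R1: "R \<ge> 1" and Rp: "\<And>x. x \<ge> R \<Longrightarrow> f x \<le> -2*x"
    and Rn: "\<And>x. x \<le> -R \<Longrightarrow> f x \<ge> -2*x"
    using cubic_escape[OF assms(1,2)] unfolding f_def by blast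
  have esc: "\<bar>f x\<bar> \<ge> 2*\<bar>x\<bar>" if "\<bar>x\<bar> \<ge> R" for x
  proof (cases "x \<ge> 0")
    case True then have "x \<ge> R" using that by simp
    then show ?thesis using Rp[of x] True by simp
  next
    case False then have "x \<le> -R" using that by simp
    then show ?thesis using Rn[of x] False by simp
  qed
  have escn: "\<bar>(f^^j) x\<bar> \<ge> 2^j*\<bar>x\<bar>" if "\<bar>x\<bar> \<ge> R" for x j
  proof (induction j)
    case 0 then show ?case by simp
  next
    case (Suc j)
    have "2^j*\<bar>x\<bar> \<ge> \<bar>x\<bar>" using that R1 by (simp add: mult_le_cancel_right1)
    then have "\<bar>(f^^j) x\<bar> \<ge> R" using Suc that by linarith
    then have "\<bar>f ((f^^j) x)\<bar> \<ge> 2*\<bar>(f^^j) x\<bar>" by (rule esc)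
    then show ?case using Suc by simp
  qed
  have fcont: "continuous_on UNIV (f^^n)" for n unfolding f_def by (rule iter_cont)
  have fcont1: "continuous_on S f" for S unfolding f_def by (intro continuous_on_poly continuous_on_id)
  define K where "K = {x. \<forall>n. \<bar>(f^^n) x\<bar> \<le> R}"
  have Kiff: "bounded (range (\<lambda>n. (f^^n) x)) \<longleftrightarrow> x \<in> K" for x
  proof
    assume "x \<in> K" then show "bounded (range (\<lambda>n. (f^^n) x))"
      unfolding bounded_iff K_def by auto
  next
    assume "bounded (range (\<lambda>n. (f^^n) x))"
    then obtain B where B: "\<And>n. \<bar>(f^^n) x\<bar> \<le> B" unfolding bounded_iff by auto
    show "x \<in> K" unfolding K_def
    proof (rule ccontr)
      assume "x \<notin> {x. \<forall>n. \<bar>(f ^^ n) x\<bar> \<le> R}"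
      then obtain n where n: "\<bar>(f^^n) x\<bar> > R" by (auto simp: not_le)
      obtain j where j: "B < 2^j" using real_arch_pow[of 2 B] by auto
      have "\<bar>(f^^j) ((f^^n) x)\<bar> \<ge> 2^j*\<bar>(f^^n) x\<bar>" using escn n by simp
      moreover have "2^j*\<bar>(f^^n) x\<bar> \<ge> (2::real)^j" using n R1
        by (simp add: mult_le_cancel_left1)
      moreover have "(f^^j) ((f^^n) x) = (f^^(j+n)) x" by (simp add: funpow_add)
      ultimately show False using B[of "j+n"] j by linarith
    qed
  qed
  have Kjul: "complex_of_real x \<in> filled_julia (map_poly complex_of_real phi) \<longleftrightarrow> x \<in> K" for x
    using julia_real_iff[of x phi] Kiff[of x] unfolding f_def by simp
  have "K = (\<Inter>n. {x. \<bar>(f^^n) x\<bar> \<le> R})" unfolding K_def by auto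
  moreover have "closed {x. \<bar>(f^^n) x\<bar> \<le> R}" for n
    by (intro closed_Collect_le continuous_intros fcont)
  ultimately have clK: "closed K" by auto
  have "K \<subseteq> cball 0 R" unfolding K_def by (auto dest: spec[of _ 0])
  then have bK: "bounded K" by (rule bounded_subset[OF bounded_cball])
  have cK: "compact K" using clK bK by (simp add: compact_eq_bounded_closed)
  have fK: "f x \<in> K" if "x \<in> K" for x
  proof -
    have "(f^^n) (f x) = (f^^Suc n) x" for n by (simp add: funpow_Suc_right del: funpow.simps)
    then show ?thesis using that unfolding K_def by (simp del: funpow.simps)
  qed
  have fK': "x \<in> K" if "f x \<in> K" for x
    unfolding K_def
  proof (intro CollectI allI)
    fix n
    have fx: "\<bar>f x\<bar> \<le> R" using that unfolding K_def by (auto dest: spec[of _ 0])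
    show "\<bar>(f^^n) x\<bar> \<le> R"
    proof (cases n)
      case 0
      show ?thesis
      proof (rule ccontr)
        assume "\<not> ?thesis"
        then have "\<bar>x\<bar> > R" using 0 by simp
        then have "\<bar>f x\<bar> \<ge> 2*\<bar>x\<bar>" using esc by simp
        then show False using fx \<open>\<bar>x\<bar> > R\<close> R1 by linarith
      qed
    next
      case (Suc k)
      have "(f^^n) x = (f^^k) (f x)" using Suc by (simp add: funpow_Suc_right del: funpow.simps)
      then show ?thesis using that unfolding K_def by auto
    qed
  qed
  obtain a b where ab: "a \<noteq> b" "a \<in> K" "b \<in> K" using assms(3) Kjul by blast
  obtain m where m: "m \<in> K" "\<And>t. t \<in> K \<Longrightarrow> m \<le> t"
    using compact_attains_inf[OF cK] ab by blast
  obtain M where M: "M \<in> K" "\<And>t. t \<in> K \<Longrightarrow> t \<le> M"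
    using compact_attains_sup[OF cK] ab by blast
  have mM: "m < M"
  proof (rule ccontr)
    assume "\<not> m < M"
    have "a \<le> M" "b \<le> M" "m \<le> a" "m \<le> b" using ab m(2) M(2) by auto
    then have "a = b" using \<open>\<not> m < M\<close> by (intro antisym) linarith+
    then show False using ab(1) by simp
  qed
  have fM: "f M = m"
  proof (rule ccontr)
    assume ne: "f M \<noteq> m"
    have "f M \<ge> m" using fK[OF M(1)] m(2) by blast
    with ne have gt: "f M > m" by simp
    define x1 where "x1 = max R (M+1) + \<bar>m\<bar>"
    have mx: "max R (M+1) \<ge> R" "max R (M+1) \<ge> M+1" "\<bar>m\<bar> \<ge> m" "\<bar>m\<bar> \<ge> -m" "\<bar>m\<bar> \<ge> 0" by auto
    have x1: "x1 \<ge> R" "x1 > M" unfolding x1_def using mx by linarith+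
    have "f x1 \<le> -2*x1" using Rp x1 by blast
    also have "-2*x1 < m" unfolding x1_def using R1 mx by (smt (verit))
    finally have "f x1 < m" .
    then have "\<exists>x. M \<le> x \<and> x \<le> x1 \<and> f x = m"
      using gt x1 by (intro IVT2'[OF _ _ _ fcont1]) auto
    then obtain x where x: "M \<le> x" "x \<le> x1" "f x = m" by blast
    have "x \<noteq> M" using x ne by auto
    then have "x > M" using x by simp
    moreover have "x \<in> K" using fK' x(3) m(1) by simp
    ultimately show False using M(2)[of x] by linarith
  qed
  have fm: "f m = M"
  proof (rule ccontr)
    assume ne: "f m \<noteq> M"
    have "f m \<le> M" using fK[OF m(1)] M(2) by blast
    with ne have lt: "f m < M" by simp
    define x1 where "x1 = - (max R (\<bar>m\<bar>+1) + \<bar>M\<bar>)"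
    have mx: "max R (\<bar>m\<bar>+1) \<ge> R" "max R (\<bar>m\<bar>+1) \<ge> \<bar>m\<bar>+1" "\<bar>m\<bar> \<ge> -m" "\<bar>M\<bar> \<ge> M" "\<bar>M\<bar> \<ge> 0" by auto
    have x1: "x1 \<le> -R" "x1 < m" unfolding x1_def using mx by linarith+
    have "f x1 \<ge> -2*x1" using Rn x1 by blast
    moreover have "-2*x1 > M" unfolding x1_def using R1 mx by (smt (verit))
    ultimately have "f x1 > M" by linarith
    then have "\<exists>x. x1 \<le> x \<and> x \<le> m \<and> f x = M"
      using lt x1 by (intro IVT2'[OF _ _ _ fcont1]) auto
    then obtain x where x: "x1 \<le> x" "x \<le> m" "f x = M" by blast
    have "x \<noteq> m" using x ne by auto
    then have "x < m" using x by simp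
    moreover have "x \<in> K" using fK' x(3) M(1) by simp
    ultimately show False using m(2)[of x] by linarith
  qed
  have per2: "periodic_of_period f 2 y \<longleftrightarrow> f (f y) = y \<and> f y \<noteq> y" for y
  proof -
    have "(\<forall>k. 0 < k \<and> k < (2::nat) \<longrightarrow> P k) \<longleftrightarrow> P 1" for P
      by (metis One_nat_def less_2_cases_iff not_gr0 zero_less_one one_less_numeral_iff semiring_norm(76))
    then show ?thesis unfolding periodic_of_period_def by (simp add: numeral_2_eq_2)
  qed
  have pm: "periodic_of_period f 2 m" using per2 fm fM mM by simp
  have pM: "periodic_of_period f 2 M" using per2 fm fM mM by simp
  have perK: "y \<in> K" if "periodic_of_period f 2 y" for y
  proof -
    have yy: "f (f y) = y" using that per2 by simp
    have orb: "(f^^n) y = y \<or> (f^^n) y = f y" for n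
      by (induction n) (use yy in auto)
    have "\<bar>(f^^n) y\<bar> \<le> max \<bar>y\<bar> \<bar>f y\<bar>" for n
      using orb[of n] by auto
    then have "bounded (range (\<lambda>n. (f^^n) y))" unfolding bounded_iff by auto
    then show ?thesis using Kiff by simp
  qed
  have part1: "\<exists>a b. a \<noteq> b \<and> periodic_of_period (poly phi) 2 a \<and> periodic_of_period (poly phi) 2 b"
    using pm pM mM unfolding f_def by (intro exI[of _ m] exI[of _ M]) auto
  have part2: "periodic_of_period (poly phi) 2 (poly phi \<alpha>)
          \<and> (\<forall>y. periodic_of_period (poly phi) 2 y \<longrightarrow> y \<le> poly phi \<alpha>)
          \<and> {x::real. complex_of_real x \<in> filled_julia (map_poly complex_of_real phi)}
              \<subseteq> {\<alpha>..poly phi \<alpha>}"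
    if h: "periodic_of_period (poly phi) 2 \<alpha>" "\<forall>y. periodic_of_period (poly phi) 2 y \<longrightarrow> \<alpha> \<le> y" for \<alpha>
  proof -
    have "\<alpha> \<le> m" using h(2) pm unfolding f_def by blast
    moreover have "m \<le> \<alpha>" using m(2) perK h(1) unfolding f_def by blast
    ultimately have am: "\<alpha> = m" by simp
    have "poly phi \<alpha> = M" using am fm unfolding f_def by simp
    then show ?thesis using pM perK M(2) m(2) Kjul am unfolding f_def by auto
  qed
  show ?thesis using part1 part2 by blast
qed

end
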